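(* Let $k,m\in\mathbb{N}$ with $m<k\le 2m$ and $\gcd(2k+1,2(2m+1))=1$, and let $a>0$ satisfy $\frac{1}{4km+3k+m+1}\le\frac{a}{2k+1}\le\frac{1}{4km+k+3m+1}$. For $s=0,\dots,4m+1$ and $n=0,\dots,2k$ define $X_{sn}=\frac{s}{2(2m+1)}-\frac{n}{2k+1}$, $\Phi_{sn}=\sum_{l\in\mathbb{Z}}Q_2\big(2a(2m+1)(l+X_{sn})\big)$ with $Q_2(x)=(1-|x|)\chi_{[-1,1]}(x)$, and $A_{sn}=\Phi_{sn}-\Phi_{s,2k+1-n}$ for $n=1,\dots,k$. Then $A_{s,n}=-A_{4m+2-s,n}$ for all $s=1,\dots,2m$ and $n=1,\dots,k$. *)

theory Defs
  imports "HOL-Analysis.Analysis"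
begin

definition Q2 :: "real \<Rightarrow> real" where
  "Q2 x = (if \<bar>x\<bar> \<le> 1 then 1 - \<bar>x\<bar> else 0)"

definition Xsn :: "nat \<Rightarrow> nat \<Rightarrow> nat \<Rightarrow> nat \<Rightarrow> real" where
  "Xsn k m s n = real s / (2 * (2 * real m + 1)) - real n / (2 * real k + 1)"

definition Phi :: "real \<Rightarrow> nat \<Rightarrow> nat \<Rightarrow> nat \<Rightarrow> nat \<Rightarrow> real" where
  "Phi a k m s n = (\<Sum>\<^sub>\<infinity>l::int. Q2 (2 * a * (2 * real m + 1) * (real_of_int l + Xsn k m s n)))"

definition Asn :: "real \<Rightarrow> nat \<Rightarrow> nat \<Rightarrow> nat \<Rightarrow> nat \<Rightarrow> real" where
  "Asn a k m s n = Phi a k m s n - Phi a k m s (2 * k + 1 - n)"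

end

theory Submission
  imports Defs
begin

lemma Phi_neg:
  assumes "Xsn k m s1 n1 = - Xsn k m s2 n2"
  shows "Phi a k m s1 n1 = Phi a k m s2 n2"
proof -
  let ?f = "\<lambda>l::int. Q2 (2 * a * (2 * real m + 1) * (real_of_int l + Xsn k m s2 n2))"
  have bij: "bij_betw (uminus :: int \<Rightarrow> int) UNIV UNIV"
    by (simp add: bij_betw_def inj_def surj_def)
  have "(\<Sum>\<^sub>\<infinity>l::int. ?f (- l)) = (\<Sum>\<^sub>\<infinity>l::int. ?f l)"
    by (rule infsum_reindex_bij_betw[OF bij])
  moreover have "\<And>l. ?f (- l) = Q2 (2 * a * (2 * real m + 1) * (real_of_int l + Xsn k m s1 n1))"
  proof -
    fix l :: int
    have "2 * a * (2 * real m + 1) * (real_of_int (- l) + Xsn k m s2 n2)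
        = - (2 * a * (2 * real m + 1) * (real_of_int l + Xsn k m s1 n1))"
      using assms by (metis minus_add_distrib mult_minus_right of_int_minus minus_minus)
    then show "?f (- l) = Q2 (2 * a * (2 * real m + 1) * (real_of_int l + Xsn k m s1 n1))"
      by (simp only: Q2_def abs_minus_cancel)
  qed
  ultimately show ?thesis unfolding Phi_def by simp
qed

theorem lemma3p3:
  fixes k m :: nat and a :: real
  assumes "m < k" and "k \<le> 2 * m"
    and "gcd (2 * k + 1) (2 * (2 * m + 1)) = 1"
    and "a > 0"
    and "1 / real (4 * k * m + 3 * k + m + 1) \<le> a / real (2 * k + 1)"
    and "a / real (2 * k + 1) \<le> 1 / real (4 * k * m + k + 3 * m + 1)"
  shows "\<forall>s \<in> {1..2 * m}. \<forall>n \<in> {1..k}. Asn a k m s n = - Asn a k m (4 * m + 2 - s) n"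
proof (intro ballI)
  fix s n assume s: "s \<in> {1..2 * m}" and n: "n \<in> {1..k}"
  have rs: "real (4 * m + 2 - s) = 4 * real m + 2 - real s" using s by auto
  have rn: "real (2 * k + 1 - n) = 2 * real k + 1 - real n" using n by auto
  have d1: "(2 * (2 * real m + 1)) \<noteq> 0" "(2 * real k + 1) \<noteq> 0" by simp_all
  have e1: "Xsn k m s (2 * k + 1 - n) = - Xsn k m (4 * m + 2 - s) n"
    unfolding Xsn_def rs rn using d1 by (simp add: field_simps) (simp add: divide_eq_eq)
  have e2: "Xsn k m s n = - Xsn k m (4 * m + 2 - s) (2 * k + 1 - n)"
    unfolding Xsn_def rs rn using d1 by (simp add: field_simps) (simp add: divide_eq_eq)
  show "Asn a k m s n = - Asn a k m (4 * m + 2 - s) n"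
    unfolding Asn_def using Phi_neg[OF e1, of a] Phi_neg[OF e2, of a] by simp
qed

end
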